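(* Let $U=A\boldsymbol\xi$, where $A=(a_{jk})$ is a real $p\times p$ matrix and $\boldsymbol\xi=(\xi_1,\dots,\xi_p)^T$ has i.i.d. entries with mean $0$, variance $1$ and finite fourth moment. Let $\Sigma=AA^T=(\sigma_{jk})$, $f=(\mathrm{tr}(\Sigma^2))^{1/2}$, $\nu=\mathrm{Var}(\xi_1^2)$. Let $\Gamma=(\gamma_{(i,j),(k,l)})$ be the $p^2\times p^2$ covariance matrix of the vector $W=(U_iU_j-\sigma_{ij})_{(i,j)\in\{1,\dots,p\}^2}$, i.e. $\gamma_{(i,j),(k,l)}=\mathrm{cov}(U_iU_j,U_kU_l)$. Then $$f_W^2:=\mathrm{tr}(\Gamma^2)=\sum_{a,b}\gamma_{ab}^2\ge\min(2,\nu^2/2)\,f^4.$$ *)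

theory Defs
  imports "HOL-Probability.Probability"
begin

definition (in prob_space) covariance :: "('a \<Rightarrow> real) \<Rightarrow> ('a \<Rightarrow> real) \<Rightarrow> real" where
  "covariance X Y = expectation (\<lambda>x. (X x - expectation X) * (Y x - expectation Y))"

end

theory Submission
  imports Defs "HOL-Library.Multiset"
begin


lemma sum4_swap:
  "(\<Sum>a\<in>A. \<Sum>b\<in>B. \<Sum>c\<in>C. \<Sum>d\<in>D. f a b c d) = (\<Sum>c\<in>C. \<Sum>d\<in>D. \<Sum>a\<in>A. \<Sum>b\<in>B. f a b c d)"
proof -
  have "(\<Sum>a\<in>A. \<Sum>b\<in>B. \<Sum>c\<in>C. \<Sum>d\<in>D. f a b c d) = (\<Sum>a\<in>A. \<Sum>c\<in>C. \<Sum>b\<in>B. \<Sum>d\<in>D. f a b c d)"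
    by (rule sum.cong[OF refl], rule sum.swap)
  also have "\<dots> = (\<Sum>c\<in>C. \<Sum>a\<in>A. \<Sum>b\<in>B. \<Sum>d\<in>D. f a b c d)" by (rule sum.swap)
  also have "\<dots> = (\<Sum>c\<in>C. \<Sum>a\<in>A. \<Sum>d\<in>D. \<Sum>b\<in>B. f a b c d)"
    by (rule sum.cong[OF refl], rule sum.cong[OF refl], rule sum.swap)
  also have "\<dots> = (\<Sum>c\<in>C. \<Sum>d\<in>D. \<Sum>a\<in>A. \<Sum>b\<in>B. f a b c d)"
    by (rule sum.cong[OF refl], rule sum.swap)
  finally show ?thesis .
qed

lemma sq_sum_swap:
  fixes w :: "'r \<Rightarrow> real" and Y :: "'r \<Rightarrow> 'i \<Rightarrow> real"
  shows "(\<Sum>a\<in>I. \<Sum>b\<in>I. (\<Sum>r\<in>R. w r * Y r a * Y r b)\<^sup>2)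
       = (\<Sum>r\<in>R. \<Sum>s\<in>R. w r * w s * (\<Sum>a\<in>I. Y r a * Y s a)\<^sup>2)"
proof -
  have "(\<Sum>a\<in>I. \<Sum>b\<in>I. (\<Sum>r\<in>R. w r * Y r a * Y r b)\<^sup>2)
     = (\<Sum>a\<in>I. \<Sum>b\<in>I. \<Sum>r\<in>R. \<Sum>s\<in>R. w r * w s * (Y r a * Y s a) * (Y r b * Y s b))"
    by (simp add: power2_eq_square sum_product mult_ac)
  also have "\<dots> = (\<Sum>r\<in>R. \<Sum>s\<in>R. \<Sum>a\<in>I. \<Sum>b\<in>I. w r * w s * (Y r a * Y s a) * (Y r b * Y s b))"
    by (rule sum4_swap)
  also have "\<dots> = (\<Sum>r\<in>R. \<Sum>s\<in>R. w r * w s * (\<Sum>a\<in>I. Y r a * Y s a)\<^sup>2)"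
    by (simp add: power2_eq_square sum_product sum_distrib_left mult_ac)
  finally show ?thesis .
qed

lemma rank_one_bound:
  fixes w :: "'r \<Rightarrow> real" and Y :: "'r \<Rightarrow> 'i \<Rightarrow> real"
  assumes "0 \<le> c" "\<And>r. r \<in> R \<Longrightarrow> c \<le> w r"
  shows "(\<Sum>a\<in>I. \<Sum>b\<in>I. (\<Sum>r\<in>R. w r * Y r a * Y r b)\<^sup>2)
       \<ge> c\<^sup>2 * (\<Sum>a\<in>I. \<Sum>b\<in>I. (\<Sum>r\<in>R. Y r a * Y r b)\<^sup>2)"
proof -
  have e: "(\<Sum>a\<in>I. \<Sum>b\<in>I. (\<Sum>r\<in>R. Y r a * Y r b)\<^sup>2) = (\<Sum>a\<in>I. \<Sum>b\<in>I. (\<Sum>r\<in>R. 1 * Y r a * Y r b)\<^sup>2)" by simp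
  show ?thesis unfolding e sq_sum_swap sum_distrib_left
  proof (intro sum_mono)
    fix r s assume "r \<in> R" "s \<in> R"
    then have "c * c \<le> w r * w s" using assms by (meson mult_mono order_trans)
    then show "c\<^sup>2 * (1 * 1 * (\<Sum>a\<in>I. Y r a * Y s a)\<^sup>2) \<le> w r * w s * (\<Sum>a\<in>I. Y r a * Y s a)\<^sup>2"
      by (simp add: power2_eq_square mult_right_mono)
  qed
qed


lemma sum_pair: "(\<Sum>a\<in>A\<times>B. h a) = (\<Sum>x\<in>A. \<Sum>y\<in>B. h (x,y))"
  by (simp add: sum.cartesian_product)

lemma YY_sum:
  fixes A :: "nat \<Rightarrow> nat \<Rightarrow> real" and p :: nat
  defines "s \<equiv> \<lambda>j k. \<Sum>l<p. A j l * A k l"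
  shows "(\<Sum>r\<in>{..<p}\<times>{..<p}. (A i (fst r) * A j (snd r) + A i (snd r) * A j (fst r)) *
                         (A k (fst r) * A l (snd r) + A k (snd r) * A l (fst r)))
        = 2 * (s i k * s j l + s i l * s j k)"
proof -
  have 1: "(\<Sum>m<p. \<Sum>n<p. A i m * A k m * (A j n * A l n)) = s i k * s j l"
    by (simp add: s_def sum_product)
  have 2: "(\<Sum>m<p. \<Sum>n<p. A i m * A l m * (A j n * A k n)) = s i l * s j k"
    by (simp add: s_def sum_product)
  have 3: "(\<Sum>m<p. \<Sum>n<p. A i n * A l n * (A j m * A k m)) = s i l * s j k"
    by (subst sum.swap) (simp add: s_def sum_product)
  have 4: "(\<Sum>m<p. \<Sum>n<p. A i n * A k n * (A j m * A l m)) = s i k * s j l"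
    by (subst sum.swap) (simp add: s_def sum_product)
  have "(\<Sum>r\<in>{..<p}\<times>{..<p}. (A i (fst r) * A j (snd r) + A i (snd r) * A j (fst r)) *
                         (A k (fst r) * A l (snd r) + A k (snd r) * A l (fst r)))
     = (\<Sum>m<p. \<Sum>n<p. A i m * A k m * (A j n * A l n)) + (\<Sum>m<p. \<Sum>n<p. A i m * A l m * (A j n * A k n))
      + (\<Sum>m<p. \<Sum>n<p. A i n * A l n * (A j m * A k m)) + (\<Sum>m<p. \<Sum>n<p. A i n * A k n * (A j m * A l m))"
    unfolding sum_pair by (simp add: sum.distrib algebra_simps)
  then show ?thesis using 1 2 3 4 by simp
qed

lemma gauss_bound:
  fixes s :: "nat \<Rightarrow> nat \<Rightarrow> real"
  shows "(\<Sum>a\<in>{..<p}\<times>{..<p}. \<Sum>b\<in>{..<p}\<times>{..<p}.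
           (2 * (s (fst a) (fst b) * s (snd a) (snd b) + s (fst a) (snd b) * s (snd a) (fst b)))\<^sup>2)
        \<ge> 8 * (\<Sum>j<p. \<Sum>k<p. (s j k)\<^sup>2)\<^sup>2"
proof -
  define F where "F = (\<Sum>j<p. \<Sum>k<p. (s j k)\<^sup>2)"
  have X: "(\<Sum>i<p. \<Sum>j<p. \<Sum>k<p. \<Sum>l<p. (s i k * s j l)\<^sup>2) = F\<^sup>2"
    unfolding F_def power2_eq_square sum_product by (simp add: mult_ac)
  have Yq: "(\<Sum>i<p. \<Sum>j<p. \<Sum>k<p. \<Sum>l<p. (s i l * s j k)\<^sup>2) = F\<^sup>2"
  proof -
    have "(\<Sum>i<p. \<Sum>j<p. \<Sum>k<p. \<Sum>l<p. (s i l * s j k)\<^sup>2) = (\<Sum>i<p. \<Sum>j<p. \<Sum>l<p. \<Sum>k<p. (s i l * s j k)\<^sup>2)"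
      by (rule sum.cong[OF refl], rule sum.cong[OF refl], rule sum.swap)
    also have "\<dots> = F\<^sup>2" by (rule X)
    finally show ?thesis .
  qed
  have Q: "(\<Sum>i<p. \<Sum>j<p. \<Sum>k<p. \<Sum>l<p. s i k * s j l * (s i l * s j k)) \<ge> 0"
  proof -
    have "(\<Sum>i<p. \<Sum>j<p. \<Sum>k<p. \<Sum>l<p. s i k * s j l * (s i l * s j k)) = (\<Sum>i<p. \<Sum>j<p. (\<Sum>k<p. s i k * s j k)\<^sup>2)"
      by (simp add: power2_eq_square sum_product mult_ac)
    also have "\<dots> \<ge> 0" by (intro sum_nonneg) simp
    finally show ?thesis .
  qed
  have "(\<Sum>a\<in>{..<p}\<times>{..<p}. \<Sum>b\<in>{..<p}\<times>{..<p}.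
           (2 * (s (fst a) (fst b) * s (snd a) (snd b) + s (fst a) (snd b) * s (snd a) (fst b)))\<^sup>2)
     = (\<Sum>i<p. \<Sum>j<p. \<Sum>k<p. \<Sum>l<p. 4 * (s i k * s j l)\<^sup>2 + 4 * (s i l * s j k)\<^sup>2 + 8 * (s i k * s j l * (s i l * s j k)))"
    unfolding sum_pair by (simp add: power2_eq_square algebra_simps)
  also have "\<dots> = 4 * (\<Sum>i<p. \<Sum>j<p. \<Sum>k<p. \<Sum>l<p. (s i k * s j l)\<^sup>2) + 4 * (\<Sum>i<p. \<Sum>j<p. \<Sum>k<p. \<Sum>l<p. (s i l * s j k)\<^sup>2)
       + 8 * (\<Sum>i<p. \<Sum>j<p. \<Sum>k<p. \<Sum>l<p. s i k * s j l * (s i l * s j k))"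
    by (simp add: sum.distrib sum_distrib_left)
  finally show ?thesis using X Yq Q unfolding F_def[symmetric] by simp
qed

lemma gamma_rep:
  fixes A :: "nat \<Rightarrow> nat \<Rightarrow> real" and p :: nat
  defines "s \<equiv> \<lambda>j k. \<Sum>l<p. A j l * A k l"
  shows "s i k * s j l + s i l * s j k + (\<nu> - 2) * (\<Sum>m<p. A i m * A j m * A k m * A l m)
      = (\<Sum>r\<in>{..<p}\<times>{..<p}. (if fst r = snd r then \<nu>/4 else 1/2) *
             (A i (fst r) * A j (snd r) + A i (snd r) * A j (fst r)) *
             (A k (fst r) * A l (snd r) + A k (snd r) * A l (fst r)))"
proof -
  let ?Y = "\<lambda>r. (A i (fst r) * A j (snd r) + A i (snd r) * A j (fst r)) *
             (A k (fst r) * A l (snd r) + A k (snd r) * A l (fst r))"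
  have "(\<Sum>r\<in>{..<p}\<times>{..<p}. (if fst r = snd r then \<nu>/4 else 1/2) * ?Y r)
     = (\<Sum>r\<in>{..<p}\<times>{..<p}. 1/2 * ?Y r + (if fst r = snd r then (\<nu> - 2)/4 * ?Y r else 0))"
    by (rule sum.cong) (auto simp: field_simps)
  also have "\<dots> = 1/2 * (\<Sum>r\<in>{..<p}\<times>{..<p}. ?Y r) + (\<Sum>m<p. \<Sum>n<p. (if m = n then (\<nu> - 2)/4 * ?Y (m,n) else 0))"
    by (simp add: sum.distrib sum_distrib_left sum_pair)
  also have "(\<Sum>m<p. \<Sum>n<p. (if m = n then (\<nu> - 2)/4 * ?Y (m,n) else 0)) = (\<Sum>m<p. (\<nu> - 2)/4 * ?Y (m,m))"
    by (rule sum.cong[OF refl]) (simp add: sum.delta)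
  also have "\<dots> = (\<Sum>m<p. (\<nu> - 2) * (A i m * A j m * A k m * A l m))"
    by (rule sum.cong[OF refl]) (simp add: field_simps)
  also have "\<dots> = (\<nu> - 2) * (\<Sum>m<p. A i m * A j m * A k m * A l m)"
    by (simp add: sum_distrib_left)
  finally show ?thesis unfolding YY_sum s_def by (simp add: algebra_simps)
qed


lemma pow_le_1_4: fixes x :: real assumes "c \<le> 4" shows "\<bar>x ^ c\<bar> \<le> 1 + x ^ 4"
proof (cases "\<bar>x\<bar> \<le> 1")
  case True
  then have "\<bar>x\<bar> ^ c \<le> 1" by (simp add: power_le_one)
  moreover have "x ^ 4 \<ge> 0" by (simp add: zero_le_even_power)
  moreover have "\<bar>x ^ c\<bar> = \<bar>x\<bar> ^ c" by (simp add: power_abs)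
  ultimately show ?thesis by linarith
next
  case False
  then have "\<bar>x\<bar> ^ c \<le> \<bar>x\<bar> ^ 4" using assms by (intro power_increasing) auto
  also have "\<dots> = x ^ 4" by (simp add: power_abs[symmetric] zero_le_even_power)
  finally show ?thesis by (simp add: power_abs)
qed

lemma prod_eval:
  fixes g :: "nat \<Rightarrow> nat \<Rightarrow> real"
  assumes g1: "\<And>k. g k (Suc 0) = 0" and g2: "\<And>k. g k 2 = 1" and g4: "\<And>k. g k 4 = \<mu>"
  shows "(\<Prod>k\<in>set_mset {#a,b,c,d#}. g k (count {#a,b,c,d#} k)) =
    (if a = b \<and> c = d then 1 else 0) + (if a = c \<and> b = d then 1 else 0) + (if a = d \<and> b = c then 1 else 0)
    + (if a = b \<and> b = c \<and> c = d then \<mu> - 3 else 0)"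
proof -
  have g2': "\<And>k. g k (Suc (Suc 0)) = 1" using g2 by (simp add: numeral_2_eq_2)
  have g4': "\<And>k. g k (Suc (Suc (Suc (Suc 0)))) = \<mu>" using g4 by (simp add: numeral_eq_Suc)
  show ?thesis
    by (cases "a = b"; cases "a = c"; cases "a = d"; cases "b = c"; cases "b = d"; cases "c = d")
       (simp_all add: g1 g2' g4' insert_commute)
qed

lemma prod_eval2:
  fixes g :: "nat \<Rightarrow> nat \<Rightarrow> real"
  assumes g1: "\<And>k. g k (Suc 0) = 0" and g2: "\<And>k. g k 2 = 1"
  shows "(\<Prod>k\<in>set_mset {#a,b#}. g k (count {#a,b#} k)) = (if a = b then 1 else 0)"
proof -
  have g2': "\<And>k. g k (Suc (Suc 0)) = 1" using g2 by (simp add: numeral_2_eq_2)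
  show ?thesis by (cases "a = b") (simp_all add: g1 g2')
qed

context prob_space begin

lemma integrable_pow:
  fixes X :: "'a \<Rightarrow> real"
  assumes meas: "random_variable borel X" and fourth: "integrable M (\<lambda>x. X x ^ 4)" and "c \<le> 4"
  shows "integrable M (\<lambda>x. X x ^ c)"
proof (rule Bochner_Integration.integrable_bound[where f = "\<lambda>x. 1 + X x ^ 4"])
  show "integrable M (\<lambda>x. 1 + X x ^ 4)" using fourth by simp
  show "(\<lambda>x. X x ^ c) \<in> borel_measurable M" using meas by measurable
  show "AE x in M. norm (X x ^ c) \<le> norm (1 + X x ^ 4)"
    using pow_le_1_4[OF \<open>c \<le> 4\<close>] by (auto simp: zero_le_even_power)
qed

lemma prod_moment:
  fixes \<xi> :: "nat \<Rightarrow> 'a \<Rightarrow> real"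
  assumes meas: "\<And>k. k < p \<Longrightarrow> \<xi> k \<in> borel_measurable M"
    and indep: "indep_vars (\<lambda>_. borel) \<xi> {..<p}"
    and fourth: "\<And>k. k < p \<Longrightarrow> integrable M (\<lambda>x. (\<xi> k x) ^ 4)"
    and S: "S \<subseteq> {..<p}" and c: "\<And>k. k \<in> S \<Longrightarrow> c k \<le> 4"
  shows "integrable M (\<lambda>x. \<Prod>k\<in>S. \<xi> k x ^ c k)"
    and "expectation (\<lambda>x. \<Prod>k\<in>S. \<xi> k x ^ c k) = (\<Prod>k\<in>S. expectation (\<lambda>x. \<xi> k x ^ c k))"
proof -
  have fin: "finite S" using S finite_subset by blast
  have "indep_vars (\<lambda>_. borel) (\<lambda>k x. (\<lambda>y. y ^ c k) (\<xi> k x)) {..<p}"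
    by (rule indep_vars_compose2[OF indep]) simp
  then have I: "indep_vars (\<lambda>_. borel) (\<lambda>k x. \<xi> k x ^ c k) S"
    using S by (rule indep_vars_subset)
  have int: "\<And>k. k \<in> S \<Longrightarrow> integrable M (\<lambda>x. \<xi> k x ^ c k)"
    using S by (intro integrable_pow[OF meas fourth] c) auto
  show "integrable M (\<lambda>x. \<Prod>k\<in>S. \<xi> k x ^ c k)"
    by (rule indep_vars_integrable[OF fin I int])
  show "expectation (\<lambda>x. \<Prod>k\<in>S. \<xi> k x ^ c k) = (\<Prod>k\<in>S. expectation (\<lambda>x. \<xi> k x ^ c k))"
    by (rule indep_vars_lebesgue_integral[OF fin I int])
qed

lemma mset_moment:
  fixes \<xi> :: "nat \<Rightarrow> 'a \<Rightarrow> real"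
  assumes meas: "\<And>k. k < p \<Longrightarrow> \<xi> k \<in> borel_measurable M"
    and indep: "indep_vars (\<lambda>_. borel) \<xi> {..<p}"
    and fourth: "\<And>k. k < p \<Longrightarrow> integrable M (\<lambda>x. (\<xi> k x) ^ 4)"
    and S: "set_mset Ms \<subseteq> {..<p}" and sz: "size Ms \<le> 4"
  shows "integrable M (\<lambda>x. prod_mset (image_mset (\<lambda>k. \<xi> k x) Ms))"
    and "expectation (\<lambda>x. prod_mset (image_mset (\<lambda>k. \<xi> k x) Ms)) = (\<Prod>k\<in>set_mset Ms. expectation (\<lambda>x. \<xi> k x ^ count Ms k))"
proof -
  have c: "\<And>k. k \<in> set_mset Ms \<Longrightarrow> count Ms k \<le> 4"
    using sz count_le_size[of Ms] by (meson le_trans)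
  note pm = prod_moment[OF meas indep fourth S c]
  show "integrable M (\<lambda>x. prod_mset (image_mset (\<lambda>k. \<xi> k x) Ms))"
    using pm(1) by (simp add: image_prod_mset_multiplicity)
  show "expectation (\<lambda>x. prod_mset (image_mset (\<lambda>k. \<xi> k x) Ms)) = (\<Prod>k\<in>set_mset Ms. expectation (\<lambda>x. \<xi> k x ^ count Ms k))"
    using pm(2) by (simp add: image_prod_mset_multiplicity)
qed


lemma moment4:
  fixes \<xi> :: "nat \<Rightarrow> 'a \<Rightarrow> real"
  assumes meas: "\<And>k. k < p \<Longrightarrow> \<xi> k \<in> borel_measurable M"
    and indep: "indep_vars (\<lambda>_. borel) \<xi> {..<p}"
    and fourth: "\<And>k. k < p \<Longrightarrow> integrable M (\<lambda>x. (\<xi> k x) ^ 4)"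
    and m1: "\<And>k. k < p \<Longrightarrow> expectation (\<xi> k) = 0"
    and m2: "\<And>k. k < p \<Longrightarrow> expectation (\<lambda>x. (\<xi> k x)^2) = 1"
    and m4: "\<And>k. k < p \<Longrightarrow> expectation (\<lambda>x. (\<xi> k x)^4) = \<mu>"
    and abcd: "a < p" "b < p" "c < p" "d < p"
  shows "integrable M (\<lambda>x. \<xi> a x * \<xi> b x * \<xi> c x * \<xi> d x)"
    and "expectation (\<lambda>x. \<xi> a x * \<xi> b x * \<xi> c x * \<xi> d x) =
    (if a = b \<and> c = d then 1 else 0) + (if a = c \<and> b = d then 1 else 0) + (if a = d \<and> b = c then 1 else 0)
    + (if a = b \<and> b = c \<and> c = d then \<mu> - 3 else 0)"
proof -
  define Ms where "Ms = {#a,b,c,d#}"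
  have eq: "(\<lambda>x. \<xi> a x * \<xi> b x * \<xi> c x * \<xi> d x) = (\<lambda>x. prod_mset (image_mset (\<lambda>k. \<xi> k x) Ms))"
    by (simp add: Ms_def mult_ac)
  have S: "set_mset Ms \<subseteq> {..<p}" using abcd by (simp add: Ms_def)
  have sz: "size Ms \<le> 4" by (simp add: Ms_def)
  note mm = mset_moment[OF meas indep fourth S sz]
  show "integrable M (\<lambda>x. \<xi> a x * \<xi> b x * \<xi> c x * \<xi> d x)" unfolding eq by (rule mm(1))
  define g where "g k n = (if k < p then expectation (\<lambda>x. \<xi> k x ^ n) else (if n = 1 then 0 else if n = 2 then 1 else \<mu>))" for k n
  have "expectation (\<lambda>x. \<xi> a x * \<xi> b x * \<xi> c x * \<xi> d x) = (\<Prod>k\<in>set_mset Ms. g k (count Ms k))"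
    unfolding eq by (subst mm(2)) (use S in \<open>auto intro!: prod.cong simp: g_def\<close>)
  also have "\<dots> = (if a = b \<and> c = d then 1 else 0) + (if a = c \<and> b = d then 1 else 0) + (if a = d \<and> b = c then 1 else 0)
    + (if a = b \<and> b = c \<and> c = d then \<mu> - 3 else 0)"
    unfolding Ms_def by (rule prod_eval) (auto simp: g_def m1 m2 m4)
  finally show "expectation (\<lambda>x. \<xi> a x * \<xi> b x * \<xi> c x * \<xi> d x) =
    (if a = b \<and> c = d then 1 else 0) + (if a = c \<and> b = d then 1 else 0) + (if a = d \<and> b = c then 1 else 0)
    + (if a = b \<and> b = c \<and> c = d then \<mu> - 3 else 0)" .
qed

lemma moment2:
  fixes \<xi> :: "nat \<Rightarrow> 'a \<Rightarrow> real"
  assumes meas: "\<And>k. k < p \<Longrightarrow> \<xi> k \<in> borel_measurable M"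
    and indep: "indep_vars (\<lambda>_. borel) \<xi> {..<p}"
    and fourth: "\<And>k. k < p \<Longrightarrow> integrable M (\<lambda>x. (\<xi> k x) ^ 4)"
    and m1: "\<And>k. k < p \<Longrightarrow> expectation (\<xi> k) = 0"
    and m2: "\<And>k. k < p \<Longrightarrow> expectation (\<lambda>x. (\<xi> k x)^2) = 1"
    and ab: "a < p" "b < p"
  shows "integrable M (\<lambda>x. \<xi> a x * \<xi> b x)"
    and "expectation (\<lambda>x. \<xi> a x * \<xi> b x) = (if a = b then 1 else 0)"
proof -
  define Ms where "Ms = {#a,b#}"
  have eq: "(\<lambda>x. \<xi> a x * \<xi> b x) = (\<lambda>x. prod_mset (image_mset (\<lambda>k. \<xi> k x) Ms))"
    by (simp add: Ms_def mult_ac)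
  have S: "set_mset Ms \<subseteq> {..<p}" using ab by (simp add: Ms_def)
  have sz: "size Ms \<le> 4" by (simp add: Ms_def)
  note mm = mset_moment[OF meas indep fourth S sz]
  show "integrable M (\<lambda>x. \<xi> a x * \<xi> b x)" unfolding eq by (rule mm(1))
  define g where "g k n = (if k < p then expectation (\<lambda>x. \<xi> k x ^ n) else (if n = 1 then 0 else 1))" for k n
  have "expectation (\<lambda>x. \<xi> a x * \<xi> b x) = (\<Prod>k\<in>set_mset Ms. g k (count Ms k))"
    unfolding eq by (subst mm(2)) (use S in \<open>auto intro!: prod.cong simp: g_def\<close>)
  also have "\<dots> = (if a = b then 1 else 0)"
    unfolding Ms_def by (rule prod_eval2) (auto simp: g_def m1 m2)
  finally show "expectation (\<lambda>x. \<xi> a x * \<xi> b x) = (if a = b then 1 else 0)" .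
qed

end

definition dl :: "nat \<Rightarrow> nat \<Rightarrow> real" where "dl x y = (if x = y then 1 else 0)"
lemma sum_dl: "c < p \<Longrightarrow> (\<Sum>d<p. g d * dl c d) = g c"
  by (simp add: dl_def if_distrib[of "\<lambda>x. _ * x"] sum.delta cong: if_cong)
lemma sum_dl': "c < p \<Longrightarrow> (\<Sum>d<p. g d * dl d c) = g c"
  by (simp add: dl_def if_distrib[of "\<lambda>x. _ * x"] sum.delta' cong: if_cong)

lemma prod4: "(\<Sum>a\<in>A. \<Sum>b\<in>B. \<Sum>c\<in>C. \<Sum>d\<in>D. f a b * g c d) = (\<Sum>a\<in>A. \<Sum>b\<in>B. f a b) * (\<Sum>c\<in>C. \<Sum>d\<in>D. (g c d::real))"
proof -
  have "(\<Sum>a\<in>A. \<Sum>b\<in>B. f a b) * (\<Sum>c\<in>C. \<Sum>d\<in>D. (g c d::real)) = (\<Sum>a\<in>A. \<Sum>c\<in>C. \<Sum>b\<in>B. \<Sum>d\<in>D. f a b * g c d)"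
    by (simp only: sum_product)
  also have "\<dots> = (\<Sum>a\<in>A. \<Sum>b\<in>B. \<Sum>c\<in>C. \<Sum>d\<in>D. f a b * g c d)"
    by (rule sum.cong[OF refl], rule sum.swap)
  finally show ?thesis by simp
qed

lemma T1: fixes A :: "nat\<Rightarrow>nat\<Rightarrow>real" shows
 "(\<Sum>a<p. \<Sum>b<p. \<Sum>c<p. \<Sum>d<p. A i a * A j b * A k c * A l d * (dl a b * dl c d)) = (\<Sum>m<p. A i m * A j m) * (\<Sum>m<p. A k m * A l m)"
proof -
  have "(\<Sum>a<p. \<Sum>b<p. \<Sum>c<p. \<Sum>d<p. A i a * A j b * A k c * A l d * (dl a b * dl c d))
     = (\<Sum>a<p. \<Sum>b<p. A i a * A j b * dl a b) * (\<Sum>c<p. \<Sum>d<p. A k c * A l d * dl c d)"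
    by (subst prod4[symmetric]) (simp add: mult_ac)
  also have "\<dots> = (\<Sum>m<p. A i m * A j m) * (\<Sum>m<p. A k m * A l m)"
    by (simp add: sum_dl)
  finally show ?thesis .
qed
lemma T2: fixes A :: "nat\<Rightarrow>nat\<Rightarrow>real" shows
 "(\<Sum>a<p. \<Sum>b<p. \<Sum>c<p. \<Sum>d<p. A i a * A j b * A k c * A l d * (dl a c * dl b d)) = (\<Sum>m<p. A i m * A k m) * (\<Sum>m<p. A j m * A l m)"
proof -
  have "(\<Sum>a<p. \<Sum>b<p. \<Sum>c<p. \<Sum>d<p. A i a * A j b * A k c * A l d * (dl a c * dl b d))
     = (\<Sum>a<p. \<Sum>c<p. \<Sum>b<p. \<Sum>d<p. A i a * A j b * A k c * A l d * (dl a c * dl b d))"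
    by (rule sum.cong[OF refl], rule sum.swap)
  also have "\<dots> = (\<Sum>a<p. \<Sum>c<p. A i a * A k c * dl a c) * (\<Sum>b<p. \<Sum>d<p. A j b * A l d * dl b d)"
    by (subst prod4[symmetric]) (simp add: mult_ac)
  also have "\<dots> = (\<Sum>m<p. A i m * A k m) * (\<Sum>m<p. A j m * A l m)"
    by (simp add: sum_dl)
  finally show ?thesis .
qed
lemma T3: fixes A :: "nat\<Rightarrow>nat\<Rightarrow>real" shows
 "(\<Sum>a<p. \<Sum>b<p. \<Sum>c<p. \<Sum>d<p. A i a * A j b * A k c * A l d * (dl a d * dl b c)) = (\<Sum>m<p. A i m * A l m) * (\<Sum>m<p. A j m * A k m)"
proof -
  have "(\<Sum>a<p. \<Sum>b<p. \<Sum>c<p. \<Sum>d<p. A i a * A j b * A k c * A l d * (dl a d * dl b c))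
     = (\<Sum>a<p. \<Sum>b<p. \<Sum>d<p. \<Sum>c<p. A i a * A j b * A k c * A l d * (dl a d * dl b c))"
    by (rule sum.cong[OF refl], rule sum.cong[OF refl], rule sum.swap)
  also have "\<dots> = (\<Sum>a<p. \<Sum>d<p. \<Sum>b<p. \<Sum>c<p. A i a * A j b * A k c * A l d * (dl a d * dl b c))"
    by (rule sum.cong[OF refl], rule sum.swap)
  also have "\<dots> = (\<Sum>a<p. \<Sum>d<p. A i a * A l d * dl a d) * (\<Sum>b<p. \<Sum>c<p. A j b * A k c * dl b c)"
    by (subst prod4[symmetric]) (simp add: mult_ac)
  also have "\<dots> = (\<Sum>m<p. A i m * A l m) * (\<Sum>m<p. A j m * A k m)"
    by (simp add: sum_dl)
  finally show ?thesis .
qed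
lemma T4: fixes A :: "nat\<Rightarrow>nat\<Rightarrow>real" shows
 "(\<Sum>a<p. \<Sum>b<p. \<Sum>c<p. \<Sum>d<p. A i a * A j b * A k c * A l d * (z * (dl a b * dl b c * dl c d))) = z * (\<Sum>m<p. A i m * A j m * A k m * A l m)"
proof -
  have s1: "(\<Sum>d<p. A i a * A j b * A k c * A l d * (z * (dl a b * dl b c * dl c d))) = A i a * A j b * A k c * A l c * (z * (dl a b * dl b c))"
    if "c < p" for a b c
  proof -
    have "(\<Sum>d<p. A i a * A j b * A k c * A l d * (z * (dl a b * dl b c * dl c d))) = (\<Sum>d<p. (A i a * A j b * A k c * A l d * (z * (dl a b * dl b c))) * dl c d)"
      by (simp add: mult_ac)
    also have "\<dots> = A i a * A j b * A k c * A l c * (z * (dl a b * dl b c))" by (rule sum_dl[OF that])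
    finally show ?thesis .
  qed
  have s2: "(\<Sum>c<p. A i a * A j b * A k c * A l c * (z * (dl a b * dl b c))) = A i a * A j b * A k b * A l b * (z * dl a b)"
    if "b < p" for a b
  proof -
    have "(\<Sum>c<p. A i a * A j b * A k c * A l c * (z * (dl a b * dl b c))) = (\<Sum>c<p. (A i a * A j b * A k c * A l c * (z * dl a b)) * dl b c)"
      by (simp add: mult_ac)
    also have "\<dots> = A i a * A j b * A k b * A l b * (z * dl a b)" by (rule sum_dl[OF that])
    finally show ?thesis .
  qed
  have s3: "(\<Sum>b<p. A i a * A j b * A k b * A l b * (z * dl a b)) = A i a * A j a * A k a * A l a * z"
    if "a < p" for a
  proof -
    have "(\<Sum>b<p. A i a * A j b * A k b * A l b * (z * dl a b)) = (\<Sum>b<p. (A i a * A j b * A k b * A l b * z) * dl a b)"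
      by (simp add: mult_ac)
    also have "\<dots> = A i a * A j a * A k a * A l a * z" by (rule sum_dl[OF that])
    finally show ?thesis .
  qed
  have "(\<Sum>a<p. \<Sum>b<p. \<Sum>c<p. \<Sum>d<p. A i a * A j b * A k c * A l d * (z * (dl a b * dl b c * dl c d)))
     = (\<Sum>a<p. \<Sum>b<p. \<Sum>c<p. A i a * A j b * A k c * A l c * (z * (dl a b * dl b c)))"
    by (rule sum.cong[OF refl], rule sum.cong[OF refl], rule sum.cong[OF refl], rule s1, simp)
  also have "\<dots> = (\<Sum>a<p. \<Sum>b<p. A i a * A j b * A k b * A l b * (z * dl a b))"
    by (rule sum.cong[OF refl], rule sum.cong[OF refl], rule s2, simp)
  also have "\<dots> = (\<Sum>a<p. A i a * A j a * A k a * A l a * z)"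
    by (rule sum.cong[OF refl], rule s3, simp)
  also have "\<dots> = z * (\<Sum>m<p. A i m * A j m * A k m * A l m)"
    by (simp add: sum_distrib_left mult_ac)
  finally show ?thesis .
qed

context prob_space begin

lemma exp_sum1:
  fixes F :: "nat \<Rightarrow> 'a \<Rightarrow> real"
  shows "(\<And>a. a \<in> I \<Longrightarrow> integrable M (F a)) \<Longrightarrow> expectation (\<lambda>x. \<Sum>a\<in>I. F a x) = (\<Sum>a\<in>I. expectation (F a))"
  by (rule Bochner_Integration.integral_sum)

lemma exp_sum4:
  fixes P :: "nat \<Rightarrow> nat \<Rightarrow> nat \<Rightarrow> nat \<Rightarrow> 'a \<Rightarrow> real"
  assumes P: "\<And>a b c d. a < p \<Longrightarrow> b < p \<Longrightarrow> c < p \<Longrightarrow> d < p \<Longrightarrow> integrable M (P a b c d)"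
  shows "integrable M (\<lambda>x. \<Sum>a<p. \<Sum>b<p. \<Sum>c<p. \<Sum>d<p. C a b c d * P a b c d x)"
    and "expectation (\<lambda>x. \<Sum>a<p. \<Sum>b<p. \<Sum>c<p. \<Sum>d<p. C a b c d * P a b c d x)
        = (\<Sum>a<p. \<Sum>b<p. \<Sum>c<p. \<Sum>d<p. C a b c d * expectation (P a b c d))"
proof -
  have i1: "integrable M (\<lambda>x. C a b c d * P a b c d x)" if "a<p" "b<p" "c<p" "d<p" for a b c d
    using P[OF that] by (rule Bochner_Integration.integrable_mult_right)
  have i2: "integrable M (\<lambda>x. \<Sum>d<p. C a b c d * P a b c d x)" if "a<p" "b<p" "c<p" for a b c
    using that by (intro Bochner_Integration.integrable_sum i1) auto
  have i3: "integrable M (\<lambda>x. \<Sum>c<p. \<Sum>d<p. C a b c d * P a b c d x)" if "a<p" "b<p" for a b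
    using that by (intro Bochner_Integration.integrable_sum i2) auto
  have i4: "integrable M (\<lambda>x. \<Sum>b<p. \<Sum>c<p. \<Sum>d<p. C a b c d * P a b c d x)" if "a<p" for a
    using that by (intro Bochner_Integration.integrable_sum i3) auto
  show "integrable M (\<lambda>x. \<Sum>a<p. \<Sum>b<p. \<Sum>c<p. \<Sum>d<p. C a b c d * P a b c d x)"
    by (intro Bochner_Integration.integrable_sum i4) auto
  have "expectation (\<lambda>x. \<Sum>a<p. \<Sum>b<p. \<Sum>c<p. \<Sum>d<p. C a b c d * P a b c d x)
      = (\<Sum>a<p. expectation (\<lambda>x. \<Sum>b<p. \<Sum>c<p. \<Sum>d<p. C a b c d * P a b c d x))"
    using i4 by (intro exp_sum1) auto
  also have "\<dots> = (\<Sum>a<p. \<Sum>b<p. expectation (\<lambda>x. \<Sum>c<p. \<Sum>d<p. C a b c d * P a b c d x))"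
    using i3 by (intro sum.cong refl exp_sum1) auto
  also have "\<dots> = (\<Sum>a<p. \<Sum>b<p. \<Sum>c<p. expectation (\<lambda>x. \<Sum>d<p. C a b c d * P a b c d x))"
    using i2 by (intro sum.cong refl exp_sum1) auto
  also have "\<dots> = (\<Sum>a<p. \<Sum>b<p. \<Sum>c<p. \<Sum>d<p. expectation (\<lambda>x. C a b c d * P a b c d x))"
    using i1 by (intro sum.cong refl exp_sum1) auto
  also have "\<dots> = (\<Sum>a<p. \<Sum>b<p. \<Sum>c<p. \<Sum>d<p. C a b c d * expectation (P a b c d))"
    by (simp add: P)
  finally show "expectation (\<lambda>x. \<Sum>a<p. \<Sum>b<p. \<Sum>c<p. \<Sum>d<p. C a b c d * P a b c d x)
        = (\<Sum>a<p. \<Sum>b<p. \<Sum>c<p. \<Sum>d<p. C a b c d * expectation (P a b c d))" .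
qed

lemma exp_sum2:
  fixes P :: "nat \<Rightarrow> nat \<Rightarrow> 'a \<Rightarrow> real"
  assumes P: "\<And>a b. a < p \<Longrightarrow> b < p \<Longrightarrow> integrable M (P a b)"
  shows "integrable M (\<lambda>x. \<Sum>a<p. \<Sum>b<p. C a b * P a b x)"
    and "expectation (\<lambda>x. \<Sum>a<p. \<Sum>b<p. C a b * P a b x)
        = (\<Sum>a<p. \<Sum>b<p. C a b * expectation (P a b))"
proof -
  have i1: "integrable M (\<lambda>x. C a b * P a b x)" if "a<p" "b<p" for a b
    using P[OF that] by (rule Bochner_Integration.integrable_mult_right)
  have i2: "integrable M (\<lambda>x. \<Sum>b<p. C a b * P a b x)" if "a<p" for a
    using that by (intro Bochner_Integration.integrable_sum i1) auto
  show "integrable M (\<lambda>x. \<Sum>a<p. \<Sum>b<p. C a b * P a b x)"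
    by (intro Bochner_Integration.integrable_sum i2) auto
  have "expectation (\<lambda>x. \<Sum>a<p. \<Sum>b<p. C a b * P a b x)
      = (\<Sum>a<p. expectation (\<lambda>x. \<Sum>b<p. C a b * P a b x))"
    using i2 by (intro exp_sum1) auto
  also have "\<dots> = (\<Sum>a<p. \<Sum>b<p. expectation (\<lambda>x. C a b * P a b x))"
    using i1 by (intro sum.cong refl exp_sum1) auto
  also have "\<dots> = (\<Sum>a<p. \<Sum>b<p. C a b * expectation (P a b))"
    by (simp add: P)
  finally show "expectation (\<lambda>x. \<Sum>a<p. \<Sum>b<p. C a b * P a b x)
        = (\<Sum>a<p. \<Sum>b<p. C a b * expectation (P a b))" .
qed

lemma cov_expand:
  fixes X Y :: "'a \<Rightarrow> real"
  assumes "integrable M X" "integrable M Y" "integrable M (\<lambda>x. X x * Y x)"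
  shows "covariance X Y = expectation (\<lambda>x. X x * Y x) - expectation X * expectation Y"
proof -
  have "(\<lambda>x. (X x - expectation X) * (Y x - expectation Y))
      = (\<lambda>x. X x * Y x - expectation Y * X x - expectation X * Y x + expectation X * expectation Y)"
    by (auto simp: algebra_simps)
  then show ?thesis unfolding covariance_def using assms prob_space by (simp add: integral_diff)
qed

end


theorem mainTheorem10:
  fixes M :: "'a measure" and p :: nat and A :: "nat \<Rightarrow> nat \<Rightarrow> real"
    and \<xi> :: "nat \<Rightarrow> 'a \<Rightarrow> real" and U :: "nat \<Rightarrow> 'a \<Rightarrow> real"
    and \<sigma> :: "nat \<Rightarrow> nat \<Rightarrow> real" and f \<nu> :: real
    and \<gamma> :: "nat \<times> nat \<Rightarrow> nat \<times> nat \<Rightarrow> real"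
  assumes "prob_space M"
    and meas: "\<And>k. k < p \<Longrightarrow> \<xi> k \<in> borel_measurable M"
    and indep: "prob_space.indep_vars M (\<lambda>_. borel) \<xi> {..<p}"
    and ident: "\<And>k. k < p \<Longrightarrow> distr M borel (\<xi> k) = distr M borel (\<xi> 0)"
    and fourth: "\<And>k. k < p \<Longrightarrow> integrable M (\<lambda>x. (\<xi> k x) ^ 4)"
    and mean0: "\<And>k. k < p \<Longrightarrow> prob_space.expectation M (\<xi> k) = 0"
    and var1: "\<And>k. k < p \<Longrightarrow> prob_space.variance M (\<xi> k) = 1"
    and U_def: "U = (\<lambda>i x. \<Sum>k<p. A i k * \<xi> k x)"
    and \<sigma>_def: "\<sigma> =  (\<lambda>j k. \<Sum>l<p. A j l * A k l)"
    and f_def: "f =  sqrt (\<Sum>j<p. \<Sum>k<p. (\<sigma> j k)\<^sup>2)"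
    and \<nu>_def: "\<nu> =  prob_space.variance M (\<lambda>x. (\<xi> 0 x)\<^sup>2)"
    and \<gamma>_def: "\<gamma> =  (\<lambda>(i, j) (k, l). prob_space.covariance M (\<lambda>x. U i x * U j x) (\<lambda>x. U k x * U l x))"
  shows "(\<Sum>a\<in>{..<p} \<times> {..<p}. \<Sum>b\<in>{..<p} \<times> {..<p}. (\<gamma> a b)\<^sup>2) \<ge> min 2 (\<nu>\<^sup>2 / 2) * f ^ 4"
proof -
  interpret prob_space M by fact
  show ?thesis
  proof (cases "p = 0")
    case True then show ?thesis by (simp add: f_def)
  next
    case False
    then have p0: "0 < p" by simp
    define \<mu> where "\<mu> = expectation (\<lambda>x. \<xi> 0 x ^ 4)"
    have m1: "\<And>k. k < p \<Longrightarrow> expectation (\<xi> k) = 0" by (rule mean0)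
    have m2: "expectation (\<lambda>x. (\<xi> k x)\<^sup>2) = 1" if "k < p" for k
      using var1[OF that] mean0[OF that] by simp
    have m4: "expectation (\<lambda>x. (\<xi> k x) ^ 4) = \<mu>" if "k < p" for k
    proof -
      have "expectation (\<lambda>x. (\<xi> k x) ^ 4) = integral\<^sup>L (distr M borel (\<xi> k)) (\<lambda>y. y ^ 4)"
        using meas[OF that] by (subst integral_distr) auto
      also have "\<dots> = integral\<^sup>L (distr M borel (\<xi> 0)) (\<lambda>y. y ^ 4)" using ident[OF that] by simp
      also have "\<dots> = \<mu>" unfolding \<mu>_def using meas[OF p0] by (subst integral_distr) auto
      finally show ?thesis .
    qed
    have int2: "integrable M (\<lambda>x. (\<xi> 0 x)\<^sup>2)"
      using integrable_pow[OF meas[OF p0] fourth[OF p0], of 2] by simp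
    have nu: "\<nu> = \<mu> - 1"
    proof -
      have "\<nu> = expectation (\<lambda>x. ((\<xi> 0 x)\<^sup>2 - 1)\<^sup>2)" unfolding \<nu>_def using m2[OF p0] by simp
      also have "(\<lambda>x. ((\<xi> 0 x)\<^sup>2 - 1)\<^sup>2) = (\<lambda>x. \<xi> 0 x ^ 4 - 2 * (\<xi> 0 x)\<^sup>2 + 1)"
        by (simp add: power2_eq_square algebra_simps numeral_eq_Suc)
      also have "expectation \<dots> = \<mu> - 2 * 1 + 1"
        using fourth[OF p0] int2 m2[OF p0] by (simp add: \<mu>_def prob_space)
      finally show ?thesis by simp
    qed
    have nu_nn: "\<nu> \<ge> 0" unfolding \<nu>_def by simp

    note ind' = indep
    have mom4: "integrable M (\<lambda>x. \<xi> a x * \<xi> b x * \<xi> c x * \<xi> d x)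
       \<and> expectation (\<lambda>x. \<xi> a x * \<xi> b x * \<xi> c x * \<xi> d x) =
         dl a b * dl c d + dl a c * dl b d + dl a d * dl b c + (\<mu> - 3) * (dl a b * dl b c * dl c d)"
      if "a < p" "b < p" "c < p" "d < p" for a b c d
    proof -
      note mm = moment4[OF meas indep fourth m1 m2 m4 that]
      have "(if a = b \<and> c = d then 1 else 0) + (if a = c \<and> b = d then 1 else 0) + (if a = d \<and> b = c then 1 else 0)
         + (if a = b \<and> b = c \<and> c = d then \<mu> - 3 else 0)
         = dl a b * dl c d + dl a c * dl b d + dl a d * dl b c + (\<mu> - 3) * (dl a b * dl b c * dl c d)"
        by (simp add: dl_def)
      then show ?thesis using mm by simp
    qed
    have mom2: "integrable M (\<lambda>x. \<xi> a x * \<xi> b x) \<and> expectation (\<lambda>x. \<xi> a x * \<xi> b x) = dl a b"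
      if "a < p" "b < p" for a b
      using moment2[OF meas indep fourth m1 m2 that] by (simp add: dl_def)
    have UU: "U i x * U j x = (\<Sum>a<p. \<Sum>b<p. (A i a * A j b) * (\<xi> a x * \<xi> b x))" for i j x
      unfolding U_def by (simp add: sum_product mult_ac)
    have UUUU: "U i x * U j x * (U k x * U l x) =
       (\<Sum>a<p. \<Sum>b<p. \<Sum>c<p. \<Sum>d<p. (A i a * A j b * A k c * A l d) * (\<xi> a x * \<xi> b x * \<xi> c x * \<xi> d x))" for i j k l x
      unfolding UU prod4[symmetric] by (simp add: mult_ac)
    have E2: "integrable M (\<lambda>x. U i x * U j x) \<and> expectation (\<lambda>x. U i x * U j x) = \<sigma> i j" for i j
    proof -
      note es = exp_sum2[of p "\<lambda>a b x. \<xi> a x * \<xi> b x" "\<lambda>a b. A i a * A j b", OF conjunct1[OF mom2]]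
      have "(\<Sum>a<p. \<Sum>b<p. A i a * A j b * expectation (\<lambda>x. \<xi> a x * \<xi> b x)) = (\<Sum>a<p. \<Sum>b<p. A i a * A j b * dl a b)"
        using mom2 by (intro sum.cong refl) auto
      also have "\<dots> = (\<Sum>a<p. A i a * A j a)"
        by (intro sum.cong refl) (rule sum_dl, simp)
      finally show ?thesis unfolding UU using es \<sigma>_def by simp
    qed
    have E4: "integrable M (\<lambda>x. U i x * U j x * (U k x * U l x)) \<and> expectation (\<lambda>x. U i x * U j x * (U k x * U l x))
       = \<sigma> i j * \<sigma> k l + \<sigma> i k * \<sigma> j l + \<sigma> i l * \<sigma> j k + (\<mu> - 3) * (\<Sum>m<p. A i m * A j m * A k m * A l m)" for i j k l
    proof -
      note es = exp_sum4[of p "\<lambda>a b c d x. \<xi> a x * \<xi> b x * \<xi> c x * \<xi> d x" "\<lambda>a b c d. A i a * A j b * A k c * A l d", OF conjunct1[OF mom4]]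
      have "(\<Sum>a<p. \<Sum>b<p. \<Sum>c<p. \<Sum>d<p. A i a * A j b * A k c * A l d * expectation (\<lambda>x. \<xi> a x * \<xi> b x * \<xi> c x * \<xi> d x))
         = (\<Sum>a<p. \<Sum>b<p. \<Sum>c<p. \<Sum>d<p. A i a * A j b * A k c * A l d * (dl a b * dl c d + dl a c * dl b d + dl a d * dl b c + (\<mu> - 3) * (dl a b * dl b c * dl c d)))"
        using mom4 by (intro sum.cong refl) auto
      also have "\<dots> = (\<Sum>a<p. \<Sum>b<p. \<Sum>c<p. \<Sum>d<p. A i a * A j b * A k c * A l d * (dl a b * dl c d)) +
            (\<Sum>a<p. \<Sum>b<p. \<Sum>c<p. \<Sum>d<p. A i a * A j b * A k c * A l d * (dl a c * dl b d)) +
            (\<Sum>a<p. \<Sum>b<p. \<Sum>c<p. \<Sum>d<p. A i a * A j b * A k c * A l d * (dl a d * dl b c)) +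
            (\<Sum>a<p. \<Sum>b<p. \<Sum>c<p. \<Sum>d<p. A i a * A j b * A k c * A l d * ((\<mu> - 3) * (dl a b * dl b c * dl c d)))"
        by (simp add: distrib_left sum.distrib)
      also have "\<dots> = \<sigma> i j * \<sigma> k l + \<sigma> i k * \<sigma> j l + \<sigma> i l * \<sigma> j k + (\<mu> - 3) * (\<Sum>m<p. A i m * A j m * A k m * A l m)"
        unfolding T1 T2 T3 T4 \<sigma>_def ..
      finally show ?thesis unfolding UUUU using es by simp
    qed
    have gam: "\<gamma> (i, j) (k, l) = \<sigma> i k * \<sigma> j l + \<sigma> i l * \<sigma> j k + (\<nu> - 2) * (\<Sum>m<p. A i m * A j m * A k m * A l m)" for i j k l
    proof -
      have "\<gamma> (i, j) (k, l) = covariance (\<lambda>x. U i x * U j x) (\<lambda>x. U k x * U l x)" by (simp add: \<gamma>_def)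
      also have "\<dots> = expectation (\<lambda>x. U i x * U j x * (U k x * U l x)) - \<sigma> i j * \<sigma> k l"
        using E2[of i j] E2[of k l] E4[of i j k l] by (subst cov_expand) auto
      finally show ?thesis using E4[of i j k l] nu by simp
    qed
    define c where "c = min \<nu> 2 / 4"
    define w where "w = (\<lambda>r::nat\<times>nat. if fst r = snd r then \<nu>/4 else 1/2)"
    define Y where "Y = (\<lambda>(r::nat\<times>nat) (a::nat\<times>nat). A (fst a) (fst r) * A (snd a) (snd r) + A (fst a) (snd r) * A (snd a) (fst r))"
    define F where "F = (\<Sum>j<p. \<Sum>k<p. (\<sigma> j k)\<^sup>2)"
    have c0: "0 \<le> c" using nu_nn by (simp add: c_def)
    have cw: "c \<le> w r" for r by (auto simp: c_def w_def)
    have g_rep: "\<gamma> a b = (\<Sum>r\<in>{..<p}\<times>{..<p}. w r * Y r a * Y r b)" for a b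
    proof -
      obtain i j k l where ab: "a = (i,j)" "b = (k,l)" by fastforce
      have "\<gamma> a b = (\<Sum>l<p. A i l * A k l) * (\<Sum>la<p. A j la * A l la) + (\<Sum>la<p. A i la * A l la) * (\<Sum>l<p. A j l * A k l) +
          (\<nu> - 2) * (\<Sum>m<p. A i m * A j m * A k m * A l m)"
        unfolding ab gam \<sigma>_def by simp
      also have "\<dots> = (\<Sum>r\<in>{..<p}\<times>{..<p}. (if fst r = snd r then \<nu>/4 else 1/2) *
             (A i (fst r) * A j (snd r) + A i (snd r) * A j (fst r)) *
             (A k (fst r) * A l (snd r) + A k (snd r) * A l (fst r)))"
        by (rule gamma_rep)
      finally show ?thesis unfolding ab by (simp add: w_def Y_def)
    qed
    have YY: "(\<Sum>r\<in>{..<p}\<times>{..<p}. Y r a * Y r b) = 2 * (\<sigma> (fst a) (fst b) * \<sigma> (snd a) (snd b) + \<sigma> (fst a) (snd b) * \<sigma> (snd a) (fst b))" for a b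
      unfolding Y_def \<sigma>_def using YY_sum[where A=A and p=p and i="fst a" and j="snd a" and k="fst b" and l="snd b"] by simp
    have "(\<Sum>a\<in>{..<p} \<times> {..<p}. \<Sum>b\<in>{..<p} \<times> {..<p}. (\<gamma> a b)\<^sup>2)
        = (\<Sum>a\<in>{..<p} \<times> {..<p}. \<Sum>b\<in>{..<p} \<times> {..<p}. (\<Sum>r\<in>{..<p}\<times>{..<p}. w r * Y r a * Y r b)\<^sup>2)"
      by (simp add: g_rep)
    also have "\<dots> \<ge> c\<^sup>2 * (\<Sum>a\<in>{..<p} \<times> {..<p}. \<Sum>b\<in>{..<p} \<times> {..<p}. (\<Sum>r\<in>{..<p}\<times>{..<p}. Y r a * Y r b)\<^sup>2)"
      by (rule rank_one_bound[OF c0 cw])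
    also have "(\<Sum>a\<in>{..<p} \<times> {..<p}. \<Sum>b\<in>{..<p} \<times> {..<p}. (\<Sum>r\<in>{..<p}\<times>{..<p}. Y r a * Y r b)\<^sup>2)
       = (\<Sum>a\<in>{..<p}\<times>{..<p}. \<Sum>b\<in>{..<p}\<times>{..<p}.
           (2 * (\<sigma> (fst a) (fst b) * \<sigma> (snd a) (snd b) + \<sigma> (fst a) (snd b) * \<sigma> (snd a) (fst b)))\<^sup>2)"
      by (simp add: YY)
    finally have L: "(\<Sum>a\<in>{..<p} \<times> {..<p}. \<Sum>b\<in>{..<p} \<times> {..<p}. (\<gamma> a b)\<^sup>2) \<ge> c\<^sup>2 * (\<Sum>a\<in>{..<p}\<times>{..<p}. \<Sum>b\<in>{..<p}\<times>{..<p}.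
           (2 * (\<sigma> (fst a) (fst b) * \<sigma> (snd a) (snd b) + \<sigma> (fst a) (snd b) * \<sigma> (snd a) (fst b)))\<^sup>2)" .
    have G: "(\<Sum>a\<in>{..<p}\<times>{..<p}. \<Sum>b\<in>{..<p}\<times>{..<p}.
           (2 * (\<sigma> (fst a) (fst b) * \<sigma> (snd a) (snd b) + \<sigma> (fst a) (snd b) * \<sigma> (snd a) (fst b)))\<^sup>2) \<ge> 8 * F\<^sup>2"
      unfolding F_def by (rule gauss_bound)
    have F0: "F \<ge> 0" unfolding F_def by (intro sum_nonneg) auto
    have f2: "f\<^sup>2 = F" using F0 by (simp add: f_def F_def)
    have f4: "f ^ 4 = F\<^sup>2"
    proof -
      have "f ^ 4 = (f\<^sup>2)\<^sup>2" by (simp add: power_mult[symmetric])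
      then show ?thesis using f2 by simp
    qed
    have cc: "c\<^sup>2 * 8 = min 2 (\<nu>\<^sup>2 / 2)"
    proof -
      have h1: "\<nu> \<le> 2 \<Longrightarrow> \<nu> * \<nu> \<le> 4" using nu_nn mult_mono[of \<nu> 2 \<nu> 2] by simp
      have h2: "\<not> \<nu> \<le> 2 \<Longrightarrow> 4 \<le> \<nu> * \<nu>" using nu_nn mult_mono[of 2 \<nu> 2 \<nu>] by simp
      show ?thesis using nu_nn h1 h2 by (auto simp: c_def min_def power2_eq_square)
    qed
    have "min 2 (\<nu>\<^sup>2 / 2) * f ^ 4 = c\<^sup>2 * (8 * F\<^sup>2)" unfolding f4 cc[symmetric] by simp
    also have "\<dots> \<le> c\<^sup>2 * (\<Sum>a\<in>{..<p}\<times>{..<p}. \<Sum>b\<in>{..<p}\<times>{..<p}.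
           (2 * (\<sigma> (fst a) (fst b) * \<sigma> (snd a) (snd b) + \<sigma> (fst a) (snd b) * \<sigma> (snd a) (fst b)))\<^sup>2)"
      using G by (intro mult_left_mono) auto
    also have "\<dots> \<le> (\<Sum>a\<in>{..<p} \<times> {..<p}. \<Sum>b\<in>{..<p} \<times> {..<p}. (\<gamma> a b)\<^sup>2)" by (rule L)
    finally show ?thesis .
  qed
qed

end
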